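(* Let $\mathcal{B}$ be a pivotal bicategory, let $a,b,c,d$ be objects, and let $X\in\mathcal{B}(a,b)$ and $Y\in\mathcal{B}(c,d)$ have invertible left quantum dimensions. Then every $Z\in\mathcal{B}(a,c)$ is a retract of $Y^\dagger\otimes F\otimes X$ for some $F\in\mathcal{B}(b,d)$ (depending on $Z$), i.e. there are 2-morphisms $e:Z\to Y^\dagger\otimes F\otimes X$ and $r:Y^\dagger\otimes F\otimes X\to Z$ with $r\circ e=1_Z$.
   Context: In a bicategory $\mathcal{B}$, $I_a$ is the unit 1-morphism of $a$ and $Y\otimes X\in\mathcal{B}(a,c)$ the composite of $X\in\mathcal{B}(a,b)$, $Y\in\mathcal{B}(b,c)$. $\mathcal{B}$ has left adjoints if each $X\in\mathcal{B}(a,b)$ has $X^\dagger\in\mathcal{B}(b,a)$ with $\mathrm{ev}_X:X^\dagger\otimes X\to I_a$, $\mathrm{coev}_X:I_b\to X\otimes X^\dagger$ the counit and unit of an adjunction; it is pivotal if there are natural isomorphisms $\delta:\mathrm{Id}\Rightarrow(-)^{\dagger\dagger}$ on each $\mathcal{B}(a,b)$ compatible with $\otimes$. Set $\widetilde{\mathrm{coev}}_X=(1_{X^\dagger}\otimes\delta_X^{-1})\circ\mathrm{coev}_{X^\dagger}:I_a\to X^\dagger\otimes X$. The left quantum dimension of $X\in\mathcal{B}(a,b)$ is $\dim_{\mathrm{l}}(X)=\mathrm{ev}_X\circ\widetilde{\mathrm{coev}}_X\in\operatorname{End}(I_a)$. *)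

theory Defs
  imports Main
begin

text \<open>Conventions: a 1-morphism X has source src X and target trg X
(X in B(a,b) means src X = a, trg X = b).  The composite of X in B(a,b)
and Y in B(b,c) is hc Y X = Y \<otimes> X in B(a,c).  2-morphisms f have
domain dom f and codomain cod f; vc g f is the vertical composite g \<circ> f,
hcc g f the horizontal composite g \<otimes> f.  assoc Z Y X is the associator
(Z\<otimes>Y)\<otimes>X \<Rightarrow> Z\<otimes>(Y\<otimes>X), lu X : I_b \<otimes> X \<Rightarrow> X and
ru X : X \<otimes> I_a \<Rightarrow> X are the unitors.\<close>

record ('o, 'm, 't) bicat =
  Ob :: "'o set"
  Mor :: "'m set"
  src :: "'m \<Rightarrow> 'o"
  trg :: "'m \<Rightarrow> 'o"
  Cell :: "'t set"
  dom :: "'t \<Rightarrow> 'm"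
  cod :: "'t \<Rightarrow> 'm"
  vc :: "'t \<Rightarrow> 't \<Rightarrow> 't"
  idc :: "'m \<Rightarrow> 't"
  hc :: "'m \<Rightarrow> 'm \<Rightarrow> 'm"
  hcc :: "'t \<Rightarrow> 't \<Rightarrow> 't"
  unit :: "'o \<Rightarrow> 'm"
  assoc :: "'m \<Rightarrow> 'm \<Rightarrow> 'm \<Rightarrow> 't"
  lu :: "'m \<Rightarrow> 't"
  ru :: "'m \<Rightarrow> 't"

definition hom :: "('o, 'm, 't, 'z) bicat_scheme \<Rightarrow> 'o \<Rightarrow> 'o \<Rightarrow> 'm set" where
  "hom B a b = {X \<in> Mor B. src B X = a \<and> trg B X = b}"

definition cell :: "('o, 'm, 't, 'z) bicat_scheme \<Rightarrow> 'm \<Rightarrow> 'm \<Rightarrow> 't set" where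
  "cell B X Y = {f \<in> Cell B. dom B f = X \<and> cod B f = Y}"

definition iso :: "('o, 'm, 't, 'z) bicat_scheme \<Rightarrow> 't \<Rightarrow> bool" where
  "iso B f \<longleftrightarrow> f \<in> Cell B \<and>
     (\<exists>g \<in> cell B (cod B f) (dom B f).
        vc B g f = idc B (dom B f) \<and> vc B f g = idc B (cod B f))"

definition inv :: "('o, 'm, 't, 'z) bicat_scheme \<Rightarrow> 't \<Rightarrow> 't" where
  "inv B f = (THE g. g \<in> cell B (cod B f) (dom B f) \<and>
        vc B g f = idc B (dom B f) \<and> vc B f g = idc B (cod B f))"

locale bicategory =
  fixes B :: "('o, 'm, 't, 'z) bicat_scheme"
  assumes src_trg_Ob: "X \<in> Mor B \<Longrightarrow> src B X \<in> Ob B \<and> trg B X \<in> Ob B"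
    and dom_cod: "f \<in> Cell B \<Longrightarrow> dom B f \<in> Mor B \<and> cod B f \<in> Mor B \<and>
          src B (dom B f) = src B (cod B f) \<and> trg B (dom B f) = trg B (cod B f)"
    and idc_cell: "X \<in> Mor B \<Longrightarrow> idc B X \<in> cell B X X"
    and vc_cell: "\<lbrakk>f \<in> cell B X Y; g \<in> cell B Y Z\<rbrakk> \<Longrightarrow> vc B g f \<in> cell B X Z"
    and vc_idl: "f \<in> Cell B \<Longrightarrow> vc B (idc B (cod B f)) f = f"
    and vc_idr: "f \<in> Cell B \<Longrightarrow> vc B f (idc B (dom B f)) = f"
    and vc_assoc: "\<lbrakk>f \<in> cell B W X; g \<in> cell B X Y; h \<in> cell B Y Z\<rbrakk> \<Longrightarrow>
          vc B h (vc B g f) = vc B (vc B h g) f"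
    and unit_hom: "a \<in> Ob B \<Longrightarrow> unit B a \<in> hom B a a"
    and hc_hom: "\<lbrakk>X \<in> hom B a b; Y \<in> hom B b c\<rbrakk> \<Longrightarrow> hc B Y X \<in> hom B a c"
    and hcc_cell: "\<lbrakk>f \<in> cell B X X'; g \<in> cell B Y Y'; src B Y = trg B X\<rbrakk> \<Longrightarrow>
          hcc B g f \<in> cell B (hc B Y X) (hc B Y' X')"
    and hcc_id: "\<lbrakk>X \<in> Mor B; Y \<in> Mor B; src B Y = trg B X\<rbrakk> \<Longrightarrow>
          hcc B (idc B Y) (idc B X) = idc B (hc B Y X)"
    and interchange: "\<lbrakk>f \<in> cell B X X'; f' \<in> cell B X' X''; g \<in> cell B Y Y';
          g' \<in> cell B Y' Y''; src B Y = trg B X\<rbrakk> \<Longrightarrow>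
          hcc B (vc B g' g) (vc B f' f) = vc B (hcc B g' f') (hcc B g f)"
    and assoc_cell: "\<lbrakk>X \<in> Mor B; Y \<in> Mor B; Z \<in> Mor B; src B Y = trg B X; src B Z = trg B Y\<rbrakk>
          \<Longrightarrow> assoc B Z Y X \<in> cell B (hc B (hc B Z Y) X) (hc B Z (hc B Y X))
              \<and> iso B (assoc B Z Y X)"
    and assoc_nat: "\<lbrakk>f \<in> cell B X X'; g \<in> cell B Y Y'; h \<in> cell B Z Z';
          src B Y = trg B X; src B Z = trg B Y\<rbrakk> \<Longrightarrow>
          vc B (hcc B h (hcc B g f)) (assoc B Z Y X) = vc B (assoc B Z' Y' X') (hcc B (hcc B h g) f)"
    and lu_cell: "X \<in> Mor B \<Longrightarrow> lu B X \<in> cell B (hc B (unit B (trg B X)) X) X \<and> iso B (lu B X)"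
    and ru_cell: "X \<in> Mor B \<Longrightarrow> ru B X \<in> cell B (hc B X (unit B (src B X))) X \<and> iso B (ru B X)"
    and lu_nat: "f \<in> cell B X X' \<Longrightarrow>
          vc B f (lu B X) = vc B (lu B X') (hcc B (idc B (unit B (trg B X))) f)"
    and ru_nat: "f \<in> cell B X X' \<Longrightarrow>
          vc B f (ru B X) = vc B (ru B X') (hcc B f (idc B (unit B (src B X))))"
    and pentagon: "\<lbrakk>X \<in> Mor B; Y \<in> Mor B; Z \<in> Mor B; W \<in> Mor B;
          src B Y = trg B X; src B Z = trg B Y; src B W = trg B Z\<rbrakk> \<Longrightarrow>
          vc B (assoc B W Z (hc B Y X)) (assoc B (hc B W Z) Y X) =
          vc B (hcc B (idc B W) (assoc B Z Y X))
             (vc B (assoc B W (hc B Z Y) X) (hcc B (assoc B W Z Y) (idc B X)))"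
    and triangle: "\<lbrakk>X \<in> Mor B; Y \<in> Mor B; src B Y = trg B X\<rbrakk> \<Longrightarrow>
          vc B (hcc B (idc B Y) (lu B X)) (assoc B Y (unit B (trg B X)) X) =
          hcc B (ru B Y) (idc B X)"

text \<open>dag X = X\<dagger>, ev X : X\<dagger> \<otimes> X \<Rightarrow> I_a, coev X : I_b \<Rightarrow> X \<otimes> X\<dagger> for X in B(a,b);
piv X = \<delta>_X : X \<Rightarrow> X\<dagger>\<dagger>.\<close>

record ('o, 'm, 't) pivbicat = "('o, 'm, 't) bicat" +
  dag :: "'m \<Rightarrow> 'm"
  ev :: "'m \<Rightarrow> 't"
  coev :: "'m \<Rightarrow> 't"
  piv :: "'m \<Rightarrow> 't"

text \<open>Mate of g : A \<otimes> W \<Rightarrow> I_{src W}, giving A \<Rightarrow> W\<dagger>: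
A \<Rightarrow> A\<otimes>I \<Rightarrow> A\<otimes>(W\<otimes>W\<dagger>) \<Rightarrow> (A\<otimes>W)\<otimes>W\<dagger> \<Rightarrow> I\<otimes>W\<dagger> \<Rightarrow> W\<dagger>.\<close>
definition mate :: "('o, 'm, 't, 'z) pivbicat_scheme \<Rightarrow> 'm \<Rightarrow> 'm \<Rightarrow> 't \<Rightarrow> 't" where
  "mate B A W g =
     vc B (lu B (dag B W))
      (vc B (hcc B g (idc B (dag B W)))
        (vc B (inv B (assoc B A W (dag B W)))
          (vc B (hcc B (idc B A) (coev B W)) (inv B (ru B A)))))"

text \<open>The action of (-)\<dagger> on a 2-morphism f : X \<Rightarrow> Y, giving f\<dagger> : Y\<dagger> \<Rightarrow> X\<dagger>.\<close>
definition dagc :: "('o, 'm, 't, 'z) pivbicat_scheme \<Rightarrow> 't \<Rightarrow> 't" where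
  "dagc B f = mate B (dag B (cod B f)) (dom B f)
                (vc B (ev B (cod B f)) (hcc B (idc B (dag B (cod B f))) f))"

definition ev2 :: "('o, 'm, 't, 'z) pivbicat_scheme \<Rightarrow> 'm \<Rightarrow> 'm \<Rightarrow> 't" where
  "ev2 B Y X =
     vc B (ev B X)
      (vc B (hcc B (ru B (dag B X)) (idc B X))
        (vc B (hcc B (hcc B (idc B (dag B X)) (ev B Y)) (idc B X))
          (vc B (hcc B (assoc B (dag B X) (dag B Y) Y) (idc B X))
            (inv B (assoc B (hc B (dag B X) (dag B Y)) Y X)))))"

text \<open>Canonical isomorphism \<phi>_{Y,X} : X\<dagger> \<otimes> Y\<dagger> \<Rightarrow> (Y \<otimes> X)\<dagger>.\<close>
definition phi :: "('o, 'm, 't, 'z) pivbicat_scheme \<Rightarrow> 'm \<Rightarrow> 'm \<Rightarrow> 't" where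
  "phi B Y X = mate B (hc B (dag B X) (dag B Y)) (hc B Y X) (ev2 B Y X)"

text \<open>Canonical isomorphism \<gamma>_{Y,X} : Y\<dagger>\<dagger> \<otimes> X\<dagger>\<dagger> \<Rightarrow> (Y \<otimes> X)\<dagger>\<dagger>.\<close>
definition gam :: "('o, 'm, 't, 'z) pivbicat_scheme \<Rightarrow> 'm \<Rightarrow> 'm \<Rightarrow> 't" where
  "gam B Y X = vc B (inv B (dagc B (phi B Y X))) (phi B (dag B X) (dag B Y))"

locale left_adjoints = bicategory B
  for B :: "('o, 'm, 't, 'z) pivbicat_scheme" +
  assumes dag_hom: "X \<in> hom B a b \<Longrightarrow> dag B X \<in> hom B b a"
    and ev_cell: "X \<in> Mor B \<Longrightarrow> ev B X \<in> cell B (hc B (dag B X) X) (unit B (src B X))"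
    and coev_cell: "X \<in> Mor B \<Longrightarrow> coev B X \<in> cell B (unit B (trg B X)) (hc B X (dag B X))"
    and zigzag1: "X \<in> Mor B \<Longrightarrow>
          vc B (ru B X)
           (vc B (hcc B (idc B X) (ev B X))
             (vc B (assoc B X (dag B X) X)
               (vc B (hcc B (coev B X) (idc B X)) (inv B (lu B X))))) = idc B X"
    and zigzag2: "X \<in> Mor B \<Longrightarrow>
          vc B (lu B (dag B X))
           (vc B (hcc B (ev B X) (idc B (dag B X)))
             (vc B (inv B (assoc B (dag B X) X (dag B X)))
               (vc B (hcc B (idc B (dag B X)) (coev B X)) (inv B (ru B (dag B X)))))) =
          idc B (dag B X)"

locale pivotal_bicategory = left_adjoints B
  for B :: "('o, 'm, 't, 'z) pivbicat_scheme" +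
  assumes piv_cell: "X \<in> Mor B \<Longrightarrow> piv B X \<in> cell B X (dag B (dag B X)) \<and> iso B (piv B X)"
    and piv_nat: "f \<in> Cell B \<Longrightarrow>
          vc B (piv B (cod B f)) f = vc B (dagc B (dagc B f)) (piv B (dom B f))"
    and piv_hc: "\<lbrakk>X \<in> Mor B; Y \<in> Mor B; src B Y = trg B X\<rbrakk> \<Longrightarrow>
          piv B (hc B Y X) = vc B (gam B Y X) (hcc B (piv B Y) (piv B X))"

definition coev_tilde :: "('o, 'm, 't, 'z) pivbicat_scheme \<Rightarrow> 'm \<Rightarrow> 't" where
  "coev_tilde B X = vc B (hcc B (idc B (dag B X)) (inv B (piv B X))) (coev B (dag B X))"

definition dim_l :: "('o, 'm, 't, 'z) pivbicat_scheme \<Rightarrow> 'm \<Rightarrow> 't" where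
  "dim_l B X = vc B (ev B X) (coev_tilde B X)"

end

theory Submission
  imports Defs
begin

context bicategory
begin

lemma cellD: "f \<in> cell B X Y \<Longrightarrow> f \<in> Cell B \<and> dom B f = X \<and> cod B f = Y"
  by (simp add: cell_def)

lemma cellI: "f \<in> Cell B \<Longrightarrow> f \<in> cell B (dom B f) (cod B f)"
  by (simp add: cell_def)

lemma inv_unique:
  assumes f: "f \<in> Cell B" and g: "g \<in> cell B (cod B f) (dom B f)"
    and g': "g' \<in> cell B (cod B f) (dom B f)"
    and l: "vc B g f = idc B (dom B f)" and r: "vc B f g' = idc B (cod B f)"
  shows "g = g'"
proof -
  have "g = vc B g (idc B (cod B f))" using g vc_idr[of g] by (simp add: cell_def)
  also have "\<dots> = vc B g (vc B f g')" using r by simp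
  also have "\<dots> = vc B (vc B g f) g'" using vc_assoc[OF g' cellI[OF f] g] .
  also have "\<dots> = g'" using l g' vc_idl[of g'] by (simp add: cell_def)
  finally show ?thesis .
qed

lemma inv_props:
  assumes "iso B f"
  shows "inv B f \<in> cell B (cod B f) (dom B f) \<and> vc B (inv B f) f = idc B (dom B f)
        \<and> vc B f (inv B f) = idc B (cod B f)"
proof -
  from assms obtain g where g: "g \<in> cell B (cod B f) (dom B f)"
    "vc B g f = idc B (dom B f)" "vc B f g = idc B (cod B f)" and f: "f \<in> Cell B"
    unfolding iso_def by blast
  have "\<exists>!g. g \<in> cell B (cod B f) (dom B f) \<and>
        vc B g f = idc B (dom B f) \<and> vc B f g = idc B (cod B f)"
    using g inv_unique[OF f] by blast
  then show ?thesis unfolding inv_def by (rule theI')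
qed

lemma iso_cell: "iso B f \<Longrightarrow> f \<in> cell B (dom B f) (cod B f)"
  by (simp add: iso_def cell_def)

lemma iso_inv: assumes "iso B f" shows "iso B (inv B f)"
proof -
  have i: "inv B f \<in> cell B (cod B f) (dom B f)" "vc B (inv B f) f = idc B (dom B f)"
    "vc B f (inv B f) = idc B (cod B f)" using inv_props[OF assms] by auto
  show ?thesis unfolding iso_def
    using i iso_cell[OF assms] by (auto simp: cell_def)
qed

lemma iso_idc: "X \<in> Mor B \<Longrightarrow> iso B (idc B X)"
  unfolding iso_def using idc_cell[of X] vc_idl[of "idc B X"]
  by (auto simp: cell_def)

lemma iso_vc:
  assumes f: "iso B f" and g: "iso B g" and fg: "cod B f = dom B g"
  shows "iso B (vc B g f)"
proof -
  have F: "f \<in> cell B (dom B f) (cod B f)" by (rule iso_cell[OF f])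
  have G: "g \<in> cell B (cod B f) (cod B g)" using iso_cell[OF g] fg by simp
  have iF: "inv B f \<in> cell B (cod B f) (dom B f)" "vc B (inv B f) f = idc B (dom B f)"
    "vc B f (inv B f) = idc B (cod B f)" using inv_props[OF f] by auto
  have iG: "inv B g \<in> cell B (cod B g) (cod B f)" "vc B (inv B g) g = idc B (cod B f)"
    "vc B g (inv B g) = idc B (cod B g)" using inv_props[OF g] fg by auto
  have gf: "vc B g f \<in> cell B (dom B f) (cod B g)" by (rule vc_cell[OF F G])
  have h: "vc B (inv B f) (inv B g) \<in> cell B (cod B g) (dom B f)" by (rule vc_cell[OF iG(1) iF(1)])
  have "vc B (vc B (inv B f) (inv B g)) (vc B g f) = vc B (inv B f) (vc B (inv B g) (vc B g f))"
    using vc_assoc[OF gf iG(1) iF(1)] by simp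
  also have "vc B (inv B g) (vc B g f) = vc B (vc B (inv B g) g) f" using vc_assoc[OF F G iG(1)] .
  also have "\<dots> = f" using iG(2) vc_idl[of f] F by (simp add: cell_def)
  finally have 1: "vc B (vc B (inv B f) (inv B g)) (vc B g f) = idc B (dom B f)" using iF by simp
  have "vc B (vc B g f) (vc B (inv B f) (inv B g)) = vc B g (vc B f (vc B (inv B f) (inv B g)))"
    using vc_assoc[OF h F G] by simp
  also have "vc B f (vc B (inv B f) (inv B g)) = vc B (vc B f (inv B f)) (inv B g)"
    using vc_assoc[OF iG(1) iF(1) F] .
  also have "\<dots> = inv B g" using iF(3) vc_idl[of "inv B g"] iG(1) by (simp add: cell_def)
  finally have 2: "vc B (vc B g f) (vc B (inv B f) (inv B g)) = idc B (cod B g)" using iG by simp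
  show ?thesis unfolding iso_def using gf h 1 2 by (auto simp: cell_def)
qed

lemma iso_hcc:
  assumes f: "iso B f" and g: "iso B g" and s: "src B (dom B g) = trg B (dom B f)"
  shows "iso B (hcc B g f)"
proof -
  have F: "f \<in> cell B (dom B f) (cod B f)" by (rule iso_cell[OF f])
  have G: "g \<in> cell B (dom B g) (cod B g)" by (rule iso_cell[OF g])
  have iF: "inv B f \<in> cell B (cod B f) (dom B f)" "vc B (inv B f) f = idc B (dom B f)"
    "vc B f (inv B f) = idc B (cod B f)" using inv_props[OF f] by auto
  have iG: "inv B g \<in> cell B (cod B g) (dom B g)" "vc B (inv B g) g = idc B (dom B g)"
    "vc B g (inv B g) = idc B (cod B g)" using inv_props[OF g] by auto
  have mf: "dom B f \<in> Mor B" "cod B f \<in> Mor B" "trg B (dom B f) = trg B (cod B f)"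
    using dom_cod[of f] F by (auto simp: cell_def)
  have mg: "dom B g \<in> Mor B" "cod B g \<in> Mor B" "src B (dom B g) = src B (cod B g)"
    using dom_cod[of g] G by (auto simp: cell_def)
  have s': "src B (cod B g) = trg B (cod B f)" using s mf mg by simp
  have c1: "hcc B g f \<in> cell B (hc B (dom B g) (dom B f)) (hc B (cod B g) (cod B f))"
    by (rule hcc_cell[OF F G s])
  have c2: "hcc B (inv B g) (inv B f) \<in> cell B (hc B (cod B g) (cod B f)) (hc B (dom B g) (dom B f))"
    by (rule hcc_cell[OF iF(1) iG(1) s'])
  have 1: "vc B (hcc B (inv B g) (inv B f)) (hcc B g f) = idc B (hc B (dom B g) (dom B f))"
    using interchange[OF F iF(1) G iG(1) s, symmetric] iF iG hcc_id[OF mf(1) mg(1) s] by simp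
  have 2: "vc B (hcc B g f) (hcc B (inv B g) (inv B f)) = idc B (hc B (cod B g) (cod B f))"
    using interchange[OF iF(1) F iG(1) G s', symmetric] iF iG hcc_id[OF mf(2) mg(2) s'] by simp
  show ?thesis unfolding iso_def using c1 c2 1 2 by (auto simp: cell_def)
qed

lemma retract_lemma:
  assumes e0: "e0 \<in> cell B Z W" and r0: "r0 \<in> cell B W Z" and i: "iso B (vc B r0 e0)"
    and a: "\<alpha> \<in> cell B W W'" and ia: "iso B \<alpha>"
  shows "\<exists>e r. e \<in> cell B Z W' \<and> r \<in> cell B W' Z \<and> vc B r e = idc B Z"
proof -
  have re: "vc B r0 e0 \<in> cell B Z Z" by (rule vc_cell[OF e0 r0])
  have iA: "inv B \<alpha> \<in> cell B W' W" "vc B (inv B \<alpha>) \<alpha> = idc B W"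
    using inv_props[OF ia] a by (auto simp: cell_def)
  have iR: "inv B (vc B r0 e0) \<in> cell B Z Z" "vc B (inv B (vc B r0 e0)) (vc B r0 e0) = idc B Z"
    using inv_props[OF i] re by (auto simp: cell_def)
  define e where "e = vc B \<alpha> e0"
  define r where "r = vc B (inv B (vc B r0 e0)) (vc B r0 (inv B \<alpha>))"
  have ec: "e \<in> cell B Z W'" unfolding e_def by (rule vc_cell[OF e0 a])
  have r1: "vc B r0 (inv B \<alpha>) \<in> cell B W' Z" by (rule vc_cell[OF iA(1) r0])
  have rc: "r \<in> cell B W' Z" unfolding r_def by (rule vc_cell[OF r1 iR(1)])
  have "vc B r e = vc B (inv B (vc B r0 e0)) (vc B (vc B r0 (inv B \<alpha>)) e)"
    unfolding r_def using vc_assoc[OF ec r1 iR(1)] by simp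
  also have "vc B (vc B r0 (inv B \<alpha>)) e = vc B r0 (vc B (inv B \<alpha>) e)"
    using vc_assoc[OF ec iA(1) r0] by simp
  also have "vc B (inv B \<alpha>) e = vc B (vc B (inv B \<alpha>) \<alpha>) e0"
    unfolding e_def using vc_assoc[OF e0 a iA(1)] .
  also have "\<dots> = e0" using iA(2) e0 vc_idl[of e0] by (simp add: cell_def)
  finally have "vc B r e = idc B Z" using iR(2) by simp
  then show ?thesis using ec rc by blast
qed


lemma homD: "X \<in> hom B a b \<Longrightarrow> X \<in> Mor B \<and> src B X = a \<and> trg B X = b"
  by (simp add: hom_def)

lemma iso_vc': "\<lbrakk>f \<in> cell B X Y; g \<in> cell B Y Z; iso B f; iso B g\<rbrakk> \<Longrightarrow> iso B (vc B g f)"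
  by (rule iso_vc) (auto simp: cell_def)

lemma iso_hcc': "\<lbrakk>f \<in> cell B X X'; g \<in> cell B Y Y'; src B Y = trg B X; iso B f; iso B g\<rbrakk>
   \<Longrightarrow> iso B (hcc B g f)"
  by (rule iso_hcc) (auto simp: cell_def)

lemma inv_cell: "\<lbrakk>f \<in> cell B X Y; iso B f\<rbrakk> \<Longrightarrow> inv B f \<in> cell B Y X"
  using inv_props[of f] by (auto simp: cell_def)

end


context pivotal_bicategory
begin

lemma coev_tilde_cell:
  assumes X: "X \<in> Mor B"
  shows "coev_tilde B X \<in> cell B (unit B (src B X)) (hc B (dag B X) X)"
proof -
  have hX: "X \<in> hom B (src B X) (trg B X)" using X by (simp add: hom_def)
  have hD: "dag B X \<in> hom B (trg B X) (src B X)" by (rule dag_hom[OF hX])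
  have hDD: "dag B (dag B X) \<in> hom B (src B X) (trg B X)" by (rule dag_hom[OF hD])
  have c1: "coev B (dag B X) \<in> cell B (unit B (src B X)) (hc B (dag B X) (dag B (dag B X)))"
    using coev_cell[of "dag B X"] hD by (simp add: hom_def)
  have p: "inv B (piv B X) \<in> cell B (dag B (dag B X)) X"
    using piv_cell[OF X] inv_cell by blast
  have i: "idc B (dag B X) \<in> cell B (dag B X) (dag B X)" using idc_cell hD by (simp add: hom_def)
  have c2: "hcc B (idc B (dag B X)) (inv B (piv B X)) \<in>
      cell B (hc B (dag B X) (dag B (dag B X))) (hc B (dag B X) X)"
    by (rule hcc_cell[OF p i]) (use hD hDD in \<open>simp add: hom_def\<close>)
  show ?thesis unfolding coev_tilde_def by (rule vc_cell[OF c1 c2])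
qed

lemma ev_cell': "X \<in> Mor B \<Longrightarrow> ev B X \<in> cell B (hc B (dag B X) X) (unit B (src B X))"
  by (rule ev_cell)

end

theorem proposition2p3:
  fixes B :: "('o, 'm, 't, 'z) pivbicat_scheme"
  assumes "pivotal_bicategory B"
    and "a \<in> Ob B" and "b \<in> Ob B" and "c \<in> Ob B" and "d \<in> Ob B"
    and "X \<in> hom B a b" and "Y \<in> hom B c d"
    and "iso B (dim_l B X)" and "iso B (dim_l B Y)"
  shows "\<forall>Z \<in> hom B a c. \<exists>F \<in> hom B b d. \<exists>e r.
           e \<in> cell B Z (hc B (dag B Y) (hc B F X)) \<and>
           r \<in> cell B (hc B (dag B Y) (hc B F X)) Z \<and>
           vc B r e = idc B Z"
proof
  fix Z assume hZ: "Z \<in> hom B a c"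
  interpret pivotal_bicategory B by fact
  note hX = assms(6) and hY = assms(7)
  have hDx: "dag B X \<in> hom B b a" by (rule dag_hom[OF hX])
  have hDy: "dag B Y \<in> hom B d c" by (rule dag_hom[OF hY])
  have ua: "unit B a \<in> hom B a a" by (rule unit_hom[OF assms(2)])
  have uc: "unit B c \<in> hom B c c" by (rule unit_hom[OF assms(4)])
  note H = homD[OF hX] homD[OF hY] homD[OF hZ] homD[OF hDx] homD[OF hDy] homD[OF ua] homD[OF uc]
  define P where "P = hc B (dag B X) X"
  define Q where "Q = hc B (dag B Y) Y"
  have hP: "P \<in> hom B a a" unfolding P_def by (rule hc_hom[OF hX hDx])
  have hQ: "Q \<in> hom B c c" unfolding Q_def by (rule hc_hom[OF hY hDy])
  have hZP: "hc B Z P \<in> hom B a c" by (rule hc_hom[OF hP hZ])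
  have hZDx: "hc B Z (dag B X) \<in> hom B b c" by (rule hc_hom[OF hDx hZ])
  define F where "F = hc B Y (hc B Z (dag B X))"
  have hF: "F \<in> hom B b d" unfolding F_def by (rule hc_hom[OF hZDx hY])
  have hZa: "hc B Z (unit B a) \<in> hom B a c" by (rule hc_hom[OF ua hZ])
  have hYZP: "hc B Y (hc B Z P) \<in> hom B a d" by (rule hc_hom[OF hZP hY])
  have hZDxX: "hc B (hc B Z (dag B X)) X \<in> hom B a c" by (rule hc_hom[OF hX hZDx])
  have hYZDxX: "hc B Y (hc B (hc B Z (dag B X)) X) \<in> hom B a d" by (rule hc_hom[OF hZDxX hY])
  have hFX: "hc B F X \<in> hom B a d" by (rule hc_hom[OF hX hF])
  note H2 = homD[OF hYZP] homD[OF hZDxX] homD[OF hYZDxX] homD[OF hFX] homD[OF hP] homD[OF hQ] homD[OF hZP] homD[OF hZDx] homD[OF hF] homD[OF hZa]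
  have uX: "coev_tilde B X \<in> cell B (unit B a) P"
    using coev_tilde_cell[of X] H unfolding P_def by simp
  have uY: "coev_tilde B Y \<in> cell B (unit B c) Q"
    using coev_tilde_cell[of Y] H unfolding Q_def by simp
  have vX: "ev B X \<in> cell B P (unit B a)"
    using ev_cell[of X] H unfolding P_def by simp
  have vY: "ev B Y \<in> cell B Q (unit B c)"
    using ev_cell[of Y] H unfolding Q_def by simp
  have dX: "iso B (vc B (ev B X) (coev_tilde B X))" using assms(8) by (simp add: dim_l_def)
  have dY: "iso B (vc B (ev B Y) (coev_tilde B Y))" using assms(9) by (simp add: dim_l_def)
  have iZ: "idc B Z \<in> cell B Z Z" using idc_cell H by simp
  have iUc: "idc B (unit B c) \<in> cell B (unit B c) (unit B c)" using idc_cell H by simp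
  have luZ: "lu B Z \<in> cell B (hc B (unit B c) Z) Z" "iso B (lu B Z)" using lu_cell[of Z] H by auto
  have ruZ: "ru B Z \<in> cell B (hc B Z (unit B a)) Z" "iso B (ru B Z)" using ru_cell[of Z] H by auto
  have ilu: "inv B (lu B Z) \<in> cell B Z (hc B (unit B c) Z)" using inv_cell luZ by blast
  have iru: "inv B (ru B Z) \<in> cell B Z (hc B Z (unit B a))" using inv_cell ruZ by blast
  define A0 where "A0 = vc B (hcc B (idc B (unit B c)) (inv B (ru B Z))) (inv B (lu B Z))"
  have A0h: "hcc B (idc B (unit B c)) (inv B (ru B Z)) \<in> cell B (hc B (unit B c) Z) (hc B (unit B c) (hc B Z (unit B a)))"
    by (rule hcc_cell[OF iru iUc]) (use H H2 in simp)
  have A0c: "A0 \<in> cell B Z (hc B (unit B c) (hc B Z (unit B a)))"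
    unfolding A0_def by (rule vc_cell[OF ilu A0h])
  have A0i: "iso B A0" unfolding A0_def
    by (rule iso_vc'[OF ilu A0h iso_inv[OF luZ(2)] iso_hcc'[OF iru iUc _ iso_inv[OF ruZ(2)] iso_idc]])
       (use H in simp_all)
  have iA0: "inv B A0 \<in> cell B (hc B (unit B c) (hc B Z (unit B a))) Z" using inv_cell A0c A0i by blast
  have iA0i: "iso B (inv B A0)" by (rule iso_inv[OF A0i])
  have a1i: "hcc B (idc B Z) (coev_tilde B X) \<in> cell B (hc B Z (unit B a)) (hc B Z P)"
    by (rule hcc_cell[OF uX iZ]) (use H H2 in simp)
  have a2i: "hcc B (idc B Z) (ev B X) \<in> cell B (hc B Z P) (hc B Z (unit B a))"
    by (rule hcc_cell[OF vX iZ]) (use H H2 in simp)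
  define A1 where "A1 = hcc B (coev_tilde B Y) (hcc B (idc B Z) (coev_tilde B X))"
  define A2 where "A2 = hcc B (ev B Y) (hcc B (idc B Z) (ev B X))"
  have A1c: "A1 \<in> cell B (hc B (unit B c) (hc B Z (unit B a))) (hc B Q (hc B Z P))"
    unfolding A1_def by (rule hcc_cell[OF a1i uY]) (use H H2 in simp)
  have A2c: "A2 \<in> cell B (hc B Q (hc B Z P)) (hc B (unit B c) (hc B Z (unit B a)))"
    unfolding A2_def by (rule hcc_cell[OF a2i vY]) (use H H2 in simp)
  have "vc B A2 A1 = hcc B (vc B (ev B Y) (coev_tilde B Y))
            (vc B (hcc B (idc B Z) (ev B X)) (hcc B (idc B Z) (coev_tilde B X)))"
    unfolding A1_def A2_def by (rule interchange[OF a1i a2i uY vY, symmetric]) (use H H2 in simp)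
  also have "vc B (hcc B (idc B Z) (ev B X)) (hcc B (idc B Z) (coev_tilde B X))
       = hcc B (vc B (idc B Z) (idc B Z)) (vc B (ev B X) (coev_tilde B X))"
    by (rule interchange[OF uX vX iZ iZ, symmetric]) (use H H2 in simp)
  also have "vc B (idc B Z) (idc B Z) = idc B Z" using vc_idl[of "idc B Z"] iZ by (simp add: cell_def)
  finally have A21: "vc B A2 A1 = hcc B (vc B (ev B Y) (coev_tilde B Y))
            (hcc B (idc B Z) (vc B (ev B X) (coev_tilde B X)))" .
  have dXc: "vc B (ev B X) (coev_tilde B X) \<in> cell B (unit B a) (unit B a)" by (rule vc_cell[OF uX vX])
  have dYc: "vc B (ev B Y) (coev_tilde B Y) \<in> cell B (unit B c) (unit B c)" by (rule vc_cell[OF uY vY])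
  have inner: "hcc B (idc B Z) (vc B (ev B X) (coev_tilde B X)) \<in> cell B (hc B Z (unit B a)) (hc B Z (unit B a))"
    by (rule hcc_cell[OF dXc iZ]) (use H H2 in simp)
  have A21i: "iso B (vc B A2 A1)" unfolding A21
    by (rule iso_hcc'[OF inner dYc _ iso_hcc'[OF dXc iZ _ dX iso_idc] dY]) (use H H2 in simp_all)
  have A21c: "vc B A2 A1 \<in> cell B (hc B (unit B c) (hc B Z (unit B a))) (hc B (unit B c) (hc B Z (unit B a)))"
    by (rule vc_cell[OF A1c A2c])
  define e0 where "e0 = vc B A1 A0"
  define r0 where "r0 = vc B (inv B A0) A2"
  have e0c: "e0 \<in> cell B Z (hc B Q (hc B Z P))" unfolding e0_def by (rule vc_cell[OF A0c A1c])
  have r0c: "r0 \<in> cell B (hc B Q (hc B Z P)) Z" unfolding r0_def by (rule vc_cell[OF A2c iA0])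
  have "vc B r0 e0 = vc B (inv B A0) (vc B A2 e0)"
    unfolding r0_def using vc_assoc[OF e0c A2c iA0] by simp
  also have "vc B A2 e0 = vc B (vc B A2 A1) A0" unfolding e0_def using vc_assoc[OF A0c A1c A2c] .
  finally have re: "vc B r0 e0 = vc B (inv B A0) (vc B (vc B A2 A1) A0)" .
  have rei: "iso B (vc B r0 e0)" unfolding re
    by (rule iso_vc'[OF vc_cell[OF A0c A21c] iA0 iso_vc'[OF A0c A21c A0i A21i] iA0i])
  have s1: "assoc B (dag B Y) Y (hc B Z P) \<in> cell B (hc B Q (hc B Z P)) (hc B (dag B Y) (hc B Y (hc B Z P)))"
    "iso B (assoc B (dag B Y) Y (hc B Z P))"
    using assoc_cell[of "hc B Z P" Y "dag B Y"] H H2 unfolding Q_def by auto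
  have s2: "assoc B Z (dag B X) X \<in> cell B (hc B (hc B Z (dag B X)) X) (hc B Z P)"
    "iso B (assoc B Z (dag B X) X)"
    using assoc_cell[of X "dag B X" Z] H unfolding P_def by auto
  have s3: "assoc B Y (hc B Z (dag B X)) X \<in> cell B (hc B F X) (hc B Y (hc B (hc B Z (dag B X)) X))"
    "iso B (assoc B Y (hc B Z (dag B X)) X)"
    using assoc_cell[of X "hc B Z (dag B X)" Y] H H2 unfolding F_def by auto
  have is2: "inv B (assoc B Z (dag B X) X) \<in> cell B (hc B Z P) (hc B (hc B Z (dag B X)) X)"
    using inv_cell s2 by blast
  have is3: "inv B (assoc B Y (hc B Z (dag B X)) X) \<in> cell B (hc B Y (hc B (hc B Z (dag B X)) X)) (hc B F X)"
    using inv_cell s3 by blast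
  have iY: "idc B Y \<in> cell B Y Y" using idc_cell H by simp
  have iDy: "idc B (dag B Y) \<in> cell B (dag B Y) (dag B Y)" using idc_cell H by simp
  have t1: "hcc B (idc B Y) (inv B (assoc B Z (dag B X) X)) \<in> cell B (hc B Y (hc B Z P)) (hc B Y (hc B (hc B Z (dag B X)) X))"
    by (rule hcc_cell[OF is2 iY]) (use H H2 in simp)
  have t1i: "iso B (hcc B (idc B Y) (inv B (assoc B Z (dag B X) X)))"
    by (rule iso_hcc'[OF is2 iY _ iso_inv[OF s2(2)] iso_idc]) (use H H2 in simp_all)
  have t2: "vc B (inv B (assoc B Y (hc B Z (dag B X)) X)) (hcc B (idc B Y) (inv B (assoc B Z (dag B X) X)))
       \<in> cell B (hc B Y (hc B Z P)) (hc B F X)" by (rule vc_cell[OF t1 is3])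
  have t2i: "iso B (vc B (inv B (assoc B Y (hc B Z (dag B X)) X)) (hcc B (idc B Y) (inv B (assoc B Z (dag B X) X))))"
    by (rule iso_vc'[OF t1 is3 t1i iso_inv[OF s3(2)]])
  have t3: "hcc B (idc B (dag B Y)) (vc B (inv B (assoc B Y (hc B Z (dag B X)) X)) (hcc B (idc B Y) (inv B (assoc B Z (dag B X) X))))
     \<in> cell B (hc B (dag B Y) (hc B Y (hc B Z P))) (hc B (dag B Y) (hc B F X))"
    by (rule hcc_cell[OF t2 iDy]) (use H H2 in simp)
  have t3i: "iso B (hcc B (idc B (dag B Y)) (vc B (inv B (assoc B Y (hc B Z (dag B X)) X)) (hcc B (idc B Y) (inv B (assoc B Z (dag B X) X)))))"
    by (rule iso_hcc'[OF t2 iDy _ t2i iso_idc]) (use H H2 in simp_all)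
  define \<alpha> where "\<alpha> = vc B (hcc B (idc B (dag B Y)) (vc B (inv B (assoc B Y (hc B Z (dag B X)) X)) (hcc B (idc B Y) (inv B (assoc B Z (dag B X) X))))) (assoc B (dag B Y) Y (hc B Z P))"
  have ac: "\<alpha> \<in> cell B (hc B Q (hc B Z P)) (hc B (dag B Y) (hc B F X))"
    unfolding \<alpha>_def by (rule vc_cell[OF s1(1) t3])
  have ai: "iso B \<alpha>" unfolding \<alpha>_def by (rule iso_vc'[OF s1(1) t3 s1(2) t3i])
  show "\<exists>F \<in> hom B b d. \<exists>e r.
           e \<in> cell B Z (hc B (dag B Y) (hc B F X)) \<and>
           r \<in> cell B (hc B (dag B Y) (hc B F X)) Z \<and>
           vc B r e = idc B Z"
    using hF retract_lemma[OF e0c r0c rei ac ai] by blast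
qed

end
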